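(* Let $p>0$ be fixed. Suppose there exists a choice of $x_{\mathrm{home}}\in\mathbb{Z}^2$ such that $\mathbb{E}[T]=\infty$ for any sequence of instructions. Then $\mathbb{E}[T]=\infty$ (for any sequence of instructions) for any choice of $x_{\mathrm{home}}$ other than the origin.
   Context: A sequence of instructions is an infinite walk $(x_t)_{t\ge 0}$ in $\mathbb{Z}^2$ with $x_0=0$ and $x_{t+1}-x_t\in\{(\pm1,0),(0,\pm1)\}$; it may depend on $x_{\mathrm{home}}$. The guided random walk with error probability $p$ following it is the Markov chain $(X_t)_{t\ge0}$ with $X_0=0$ and independent increments, $X_{t+1}-X_t = x_{t+1}-x_t$ with probability $1-p$, and $X_{t+1}-X_t$ uniformly distributed on $\{(\pm1,0),(0,\pm1)\}$ with probability $p$. $T := \inf\{t\ge0 : X_t = x_{\mathrm{home}}\}$. *)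

theory Defs
  imports "HOL-Probability.Probability"
begin

type_synonym pt = "int \<times> int"

definition padd :: "pt \<Rightarrow> pt \<Rightarrow> pt" where
  "padd a b = (fst a + fst b, snd a + snd b)"

definition psub :: "pt \<Rightarrow> pt \<Rightarrow> pt" where
  "psub a b = (fst a - fst b, snd a - snd b)"

definition dirs :: "pt set" where
  "dirs = {(1,0), (-1,0), (0,1), (0,-1)}"

definition instructions :: "(nat \<Rightarrow> pt) \<Rightarrow> bool" where
  "instructions x \<longleftrightarrow> x 0 = (0,0) \<and> (\<forall>t. psub (x (Suc t)) (x t) \<in> dirs)"

definition step_pmf :: "real \<Rightarrow> pt \<Rightarrow> pt pmf" where
  "step_pmf p d = bind_pmf (bernoulli_pmf p)
      (\<lambda>err. if err then pmf_of_set dirs else return_pmf d)"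

text \<open>Law of the sequence of independent increments of the guided walk.\<close>
definition incr_space :: "real \<Rightarrow> (nat \<Rightarrow> pt) \<Rightarrow> (nat \<Rightarrow> pt) measure" where
  "incr_space p x = (\<Pi>\<^sub>M t\<in>UNIV. measure_pmf (step_pmf p (psub (x (Suc t)) (x t))))"

fun walk_pos :: "(nat \<Rightarrow> pt) \<Rightarrow> nat \<Rightarrow> pt" where
  "walk_pos \<omega> 0 = (0,0)"
| "walk_pos \<omega> (Suc t) = padd (walk_pos \<omega> t) (\<omega> t)"

definition hit_time :: "pt \<Rightarrow> (nat \<Rightarrow> pt) \<Rightarrow> ennreal" where
  "hit_time h \<omega> = (if \<exists>t. walk_pos \<omega> t = h
                     then of_nat (LEAST t. walk_pos \<omega> t = h) else \<infinity>)"

definition expected_T :: "real \<Rightarrow> (nat \<Rightarrow> pt) \<Rightarrow> pt \<Rightarrow> ennreal" where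
  "expected_T p x h = (\<integral>\<^sup>+ \<omega>. hit_time h \<omega> \<partial>incr_space p x)"

end

theory Submission
  imports Defs
begin

lemma pps: "product_prob_space (\<lambda>t. measure_pmf (q t))"
  by (intro product_prob_space.intro product_sigma_finite.intro product_prob_space_axioms.intro)
     (auto intro: prob_space_measure_pmf prob_space_imp_sigma_finite)

lemma ned: fixes a b c :: nat shows "c \<le> b \<Longrightarrow> a = b - c \<longleftrightarrow> a + c = b" by auto

lemma PiM_iter_gen:
  fixes q :: "nat \<Rightarrow> 'a pmf"
  shows "distr (measure_pmf (q 0) \<Otimes>\<^sub>M (\<Pi>\<^sub>M i\<in>UNIV. measure_pmf (q (Suc i))))
     (\<Pi>\<^sub>M i\<in>UNIV. measure_pmf (q i)) (\<lambda>(s, \<omega>). case_nat s \<omega>) = (\<Pi>\<^sub>M i\<in>UNIV. measure_pmf (q i))"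
  (is "?D = ?S")
proof -
  interpret product_prob_space "\<lambda>t. measure_pmf (q t)" UNIV by (rule pps)
  interpret S': prob_space "\<Pi>\<^sub>M i\<in>UNIV. measure_pmf (q (Suc i))"
    by (intro prob_space_PiM) (auto intro: prob_space_measure_pmf)
  let ?M = "\<lambda>i. measure_pmf (q i)"
  let ?S' = "\<Pi>\<^sub>M i\<in>UNIV. measure_pmf (q (Suc i))"
  show ?thesis
  proof (rule PiM_eq)
    let ?I = "UNIV::nat set"
    let "distr _ _ ?f" = "?D"
    fix J E assume J: "finite J" "J \<subseteq> ?I" "\<And>j. j \<in> J \<Longrightarrow> E j \<in> sets (?M j)"
    let ?X = "prod_emb ?I ?M J (\<Pi>\<^sub>E j\<in>J. E j)"
    have "?f -` ?X \<inter> space (?M 0 \<Otimes>\<^sub>M ?S') = (if 0 \<in> J then E 0 else space (?M 0)) \<times>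
      (prod_emb ?I (\<lambda>i. ?M (Suc i)) (Suc -` J) (\<Pi>\<^sub>E j\<in>Suc -` J. E (Suc j)))" (is "_ = ?E \<times> ?F")
     by (auto simp: space_pair_measure space_PiM PiE_iff prod_emb_def all_conj_distrib
        split: nat.split nat.split_asm)
    then have "emeasure ?D ?X = emeasure (?M 0 \<Otimes>\<^sub>M ?S') (?E \<times> ?F)"
      by (subst emeasure_distr)
         (auto intro!: sets_PiM_I simp: split_beta' J)
    also have "\<dots> = emeasure (?M 0) ?E * emeasure ?S' ?F"
      using J by (intro S'.emeasure_pair_measure_Times) (auto intro!: sets_PiM_I finite_vimageI)
    also have "emeasure ?S' ?F = (\<Prod>j\<in>Suc -` J. emeasure (?M (Suc j)) (E (Suc j)))"
      using J by (intro Infinite_Product_Measure.emeasure_PiM_emb) (simp_all add: finite_vimageI prob_space_measure_pmf)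
    also have "\<dots> = (\<Prod>j\<in>J - {0}. emeasure (?M j) (E j))"
      by (rule prod.reindex_cong [of "\<lambda>x. x - 1"])
        (auto simp: image_iff ned ac_simps cong: conj_cong intro!: inj_onI)
    also have "emeasure (?M 0) ?E * (\<Prod>j\<in>J - {0}. emeasure (?M j) (E j)) = (\<Prod>j\<in>J. emeasure (?M j) (E j))"
      by (auto simp: measure_pmf.emeasure_space_1 prod.remove J)
    finally show "emeasure ?D ?X = (\<Prod>j\<in>J. emeasure (?M j) (E j))" .
  qed simp_all
qed

lemma walk_pos_meas[measurable]:
  fixes q :: "nat \<Rightarrow> pt pmf"
  shows "(\<lambda>\<omega>. walk_pos \<omega> t) \<in> measurable (\<Pi>\<^sub>M i\<in>UNIV. measure_pmf (q i)) (count_space UNIV)"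
proof (induction t)
  case 0
  then show ?case by simp
next
  case (Suc t)
  have c: "(\<lambda>\<omega>. \<omega> t) \<in> measurable (\<Pi>\<^sub>M i\<in>UNIV. measure_pmf (q i)) (count_space UNIV)"
    using measurable_component_singleton[of t UNIV "\<lambda>i. measure_pmf (q i)"]
    by (simp add: measurable_cong_sets sets_measure_pmf_count_space)
  have "(\<lambda>\<omega>. (\<lambda>a \<omega>. padd a (\<omega> t)) (walk_pos \<omega> t) \<omega>) \<in> measurable (\<Pi>\<^sub>M i\<in>UNIV. measure_pmf (q i)) (count_space UNIV)"
  proof (rule measurable_compose_countable'[OF _ Suc])
    fix a :: pt
    show "(\<lambda>\<omega>. (\<lambda>a \<omega>. padd a (\<omega> t)) a \<omega>) \<in> measurable (\<Pi>\<^sub>M i\<in>UNIV. measure_pmf (q i)) (count_space UNIV)"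
      using measurable_compose[OF c, of "padd a" "count_space UNIV"] by simp
  qed simp
  then show ?case by simp
qed

lemma hit_time_meas[measurable]:
  fixes q :: "nat \<Rightarrow> pt pmf"
  shows "hit_time h \<in> borel_measurable (\<Pi>\<^sub>M i\<in>UNIV. measure_pmf (q i))"
  unfolding hit_time_def by measurable

lemma walk_pos_case: "walk_pos (case_nat s \<omega>) (Suc t) = padd s (walk_pos \<omega> t)"
  by (induction t) (auto simp: padd_def)

lemma hit_time_case:
  assumes "h \<noteq> (0,0)"
  shows "hit_time h (case_nat s \<omega>) = 1 + hit_time (psub h s) \<omega>"
proof -
  have eq: "walk_pos (case_nat s \<omega>) (Suc t) = h \<longleftrightarrow> walk_pos \<omega> t = psub h s" for t
    unfolding walk_pos_case by (cases s; cases h; cases "walk_pos \<omega> t"; auto simp: padd_def psub_def)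
  have ex: "(\<exists>t. walk_pos (case_nat s \<omega>) t = h) \<longleftrightarrow> (\<exists>t. walk_pos \<omega> t = psub h s)"
    using assms eq by (metis not0_implies_Suc walk_pos.simps(1))
  show ?thesis
  proof (cases "\<exists>t. walk_pos \<omega> t = psub h s")
    case True
    then obtain t where t: "walk_pos (case_nat s \<omega>) (Suc t) = h" using eq by blast
    have "(LEAST t. walk_pos (case_nat s \<omega>) t = h) = Suc (LEAST t. walk_pos (case_nat s \<omega>) (Suc t) = h)"
      by (rule Least_Suc[where P="\<lambda>t. walk_pos (case_nat s \<omega>) t = h", OF t]) (use assms in simp)
    then show ?thesis using True ex unfolding hit_time_def eq
      by (simp add: one_enat_def)
  next
    case False
    then show ?thesis using ex unfolding hit_time_def by simp
  qed
qed

lemma case_nat_meas: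
  fixes q :: "nat \<Rightarrow> pt pmf"
  shows "(\<lambda>(s, \<omega>). case_nat s \<omega>) \<in> measurable (measure_pmf (q 0) \<Otimes>\<^sub>M (\<Pi>\<^sub>M i\<in>UNIV. measure_pmf (q (Suc i))))
     (\<Pi>\<^sub>M i\<in>UNIV. measure_pmf (q i))"
  by measurable

lemma key_ineq:
  fixes q :: "nat \<Rightarrow> pt pmf"
  assumes "h \<noteq> (0,0)"
  shows "ennreal (pmf (q 0) u) * (\<integral>\<^sup>+\<omega>. hit_time (psub h u) \<omega> \<partial>(\<Pi>\<^sub>M i\<in>UNIV. measure_pmf (q (Suc i))))
     \<le> (\<integral>\<^sup>+\<omega>. hit_time h \<omega> \<partial>(\<Pi>\<^sub>M i\<in>UNIV. measure_pmf (q i)))"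
proof -
  let ?S = "\<Pi>\<^sub>M i\<in>UNIV. measure_pmf (q i)"
  let ?S' = "\<Pi>\<^sub>M i\<in>UNIV. measure_pmf (q (Suc i))"
  let ?M0 = "measure_pmf (q 0)"
  interpret S': prob_space ?S'
    by (intro prob_space_PiM) (auto intro: prob_space_measure_pmf)
  let ?c = "\<integral>\<^sup>+\<omega>. hit_time (psub h u) \<omega> \<partial>?S'"
  have hm: "(\<lambda>z. hit_time h (case z of (s, \<omega>) \<Rightarrow> case_nat s \<omega>)) \<in> borel_measurable (?M0 \<Otimes>\<^sub>M ?S')"
    using measurable_comp[OF case_nat_meas[of q] hit_time_meas[of h q]] by (simp add: comp_def)
  have "(\<integral>\<^sup>+\<omega>. hit_time h \<omega> \<partial>?S) = (\<integral>\<^sup>+\<omega>. hit_time h \<omega> \<partial>(distr (?M0 \<Otimes>\<^sub>M ?S') ?S (\<lambda>(s, \<omega>). case_nat s \<omega>)))"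
    by (simp add: PiM_iter_gen)
  also have "\<dots> = (\<integral>\<^sup>+z. hit_time h (case z of (s, \<omega>) \<Rightarrow> case_nat s \<omega>) \<partial>(?M0 \<Otimes>\<^sub>M ?S'))"
    by (rule nn_integral_distr[OF case_nat_meas]) (simp add: hit_time_meas)
  also have "\<dots> = (\<integral>\<^sup>+s. \<integral>\<^sup>+\<omega>. hit_time h (case_nat s \<omega>) \<partial>?S' \<partial>?M0)"
    by (rule S'.nn_integral_fst[OF hm, symmetric, simplified])
  also have "\<dots> = (\<integral>\<^sup>+s. \<integral>\<^sup>+\<omega>. 1 + hit_time (psub h s) \<omega> \<partial>?S' \<partial>?M0)"
    using assms by (simp add: hit_time_case)
  also have "\<dots> \<ge> (\<integral>\<^sup>+s. ?c * indicator {u} s \<partial>?M0)"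
    by (intro nn_integral_mono) (auto simp: indicator_def intro!: nn_integral_mono)
  finally have "(\<integral>\<^sup>+s. ?c * indicator {u} s \<partial>?M0) \<le> (\<integral>\<^sup>+\<omega>. hit_time h \<omega> \<partial>?S)" .
  moreover have "(\<integral>\<^sup>+s. ?c * indicator {u} s \<partial>?M0) = ?c * ennreal (pmf (q 0) u)"
    by (simp add: emeasure_pmf_single)
  ultimately show ?thesis by (simp add: mult.commute)
qed

lemma pmf_step_pos:
  assumes "0 < p" "p \<le> 1" "u \<in> dirs"
  shows "0 < pmf (step_pmf p d) u"
proof -
  have "True \<in> set_pmf (bernoulli_pmf p)"
    using assms by (simp add: set_pmf_iff)
  moreover have "u \<in> set_pmf (pmf_of_set dirs)"
    using assms by (simp add: dirs_def)
  ultimately have "u \<in> set_pmf (step_pmf p d)"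
    unfolding step_pmf_def by (auto simp: set_bind_pmf)
  then show ?thesis by (simp add: pmf_positive)
qed

definition good :: "real \<Rightarrow> pt \<Rightarrow> bool" where
  "good p z \<longleftrightarrow> (\<exists>x. instructions x \<and> expected_T p x z \<noteq> \<infinity>)"

lemma good_step:
  assumes p: "0 < p" "p \<le> 1" and g: "good p h" and h: "h \<noteq> (0,0)" and u: "u \<in> dirs"
  shows "good p (psub h u)"
proof -
  obtain x where x: "instructions x" and E: "expected_T p x h \<noteq> \<infinity>"
    using g unfolding good_def by blast
  define q where "q t = step_pmf p (psub (x (Suc t)) (x t))" for t
  define x' where "x' t = psub (x (Suc t)) (x 1)" for t
  have ix': "instructions x'"
    using x unfolding instructions_def x'_def by (simp add: psub_def)
  have S: "incr_space p x = (\<Pi>\<^sub>M i\<in>UNIV. measure_pmf (q i))"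
    unfolding incr_space_def q_def ..
  have S': "incr_space p x' = (\<Pi>\<^sub>M i\<in>UNIV. measure_pmf (q (Suc i)))"
    unfolding incr_space_def q_def x'_def by (simp add: psub_def)
  have le: "ennreal (pmf (q 0) u) * expected_T p x' (psub h u) \<le> expected_T p x h"
    unfolding expected_T_def S S' by (rule key_ineq[OF h])
  have pos: "0 < pmf (q 0) u" unfolding q_def by (rule pmf_step_pos[OF p u])
  have "expected_T p x' (psub h u) \<noteq> \<infinity>"
  proof
    assume "expected_T p x' (psub h u) = \<infinity>"
    then have "ennreal (pmf (q 0) u) * expected_T p x' (psub h u) = \<infinity>"
      using pos by (simp add: ennreal_mult_eq_top_iff)
    then show False using le E by (simp add: top_unique)
  qed
  then show ?thesis using ix' unfolding good_def by blast
qed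

lemma good_vert:
  assumes p: "0 < p" "p \<le> 1" and a: "a \<noteq> 0" and g: "good p (a, b)"
  shows "good p (a, b')"
proof -
  have "good p (a, c)" for c
  proof (induction c rule: int_induct[where k=b])
    case base then show ?case using g .
  next
    case (step1 i)
    have "good p (psub (a, i) (0,-1))"
      by (rule good_step[OF p step1(2)]) (use a in \<open>auto simp: dirs_def\<close>)
    then show ?case by (simp add: psub_def)
  next
    case (step2 i)
    have "good p (psub (a, i) (0,1))"
      by (rule good_step[OF p step2(2)]) (use a in \<open>auto simp: dirs_def\<close>)
    then show ?case by (simp add: psub_def)
  qed
  then show ?thesis .
qed

lemma good_horiz:
  assumes p: "0 < p" "p \<le> 1" and b: "b \<noteq> 0" and g: "good p (a, b)"
  shows "good p (a', b)"
proof -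
  have "good p (c, b)" for c
  proof (induction c rule: int_induct[where k=a])
    case base then show ?case using g .
  next
    case (step1 i)
    have "good p (psub (i, b) (-1,0))"
      by (rule good_step[OF p step1(2)]) (use b in \<open>auto simp: dirs_def\<close>)
    then show ?case by (simp add: psub_def)
  next
    case (step2 i)
    have "good p (psub (i, b) (1,0))"
      by (rule good_step[OF p step2(2)]) (use b in \<open>auto simp: dirs_def\<close>)
    then show ?case by (simp add: psub_def)
  qed
  then show ?thesis .
qed

lemma good_to_11:
  assumes p: "0 < p" "p \<le> 1" and z: "z \<noteq> (0,0)" and g: "good p z"
  shows "good p (1,1)"
proof (cases z)
  case (Pair a b)
  show ?thesis
  proof (cases "a = 0")
    case True
    then have b: "b \<noteq> 0" using z Pair by simp
    have "good p (1, b)" using good_horiz[OF p b] g Pair by blast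
    then show ?thesis using good_vert[OF p, of 1] by simp
  next
    case False
    have "good p (a, 1)" using good_vert[OF p False] g Pair by blast
    then show ?thesis using good_horiz[OF p, of 1] by simp
  qed
qed

lemma good_from_11:
  assumes p: "0 < p" "p \<le> 1" and z: "z \<noteq> (0,0)" and g: "good p (1,1)"
  shows "good p z"
proof (cases z)
  case (Pair a b)
  show ?thesis
  proof (cases "a = 0")
    case True
    then have b: "b \<noteq> 0" using z Pair by simp
    have "good p (1, b)" using good_vert[OF p, of 1 1 b] g by simp
    then show ?thesis using good_horiz[OF p b] Pair by blast
  next
    case False
    have "good p (a, 1)" using good_horiz[OF p, of 1 1 a] g by simp
    then show ?thesis using good_vert[OF p False] Pair by blast
  qed
qed

lemma hit_time_0: "hit_time (0,0) \<omega> = 0"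
proof -
  have e: "\<exists>t. walk_pos \<omega> t = (0,0)" using walk_pos.simps(1) by blast
  show ?thesis unfolding hit_time_def using e by (auto intro!: Least_eq_0)
qed

theorem lemma1:
  fixes p :: real
  assumes "0 < p" and "p \<le> 1"
    and "\<exists>h0 :: pt. \<forall>x. instructions x \<longrightarrow> expected_T p x h0 = \<infinity>"
  shows "\<forall>h :: pt. h \<noteq> (0,0) \<longrightarrow> (\<forall>x. instructions x \<longrightarrow> expected_T p x h = \<infinity>)"
proof (intro allI impI)
  fix h :: pt and x
  assume h: "h \<noteq> (0,0)" and x: "instructions x"
  obtain h0 where h0: "\<forall>x. instructions x \<longrightarrow> expected_T p x h0 = \<infinity>" using assms(3) by blast
  have i0: "instructions (\<lambda>t. (int t, 0))"
    by (simp add: instructions_def psub_def dirs_def)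
  have "h0 \<noteq> (0,0)"
  proof
    assume "h0 = (0,0)"
    then have "expected_T p (\<lambda>t. (int t, 0)) h0 = 0"
      by (simp add: expected_T_def hit_time_0)
    then show False using h0 i0 by auto
  qed
  show "expected_T p x h = \<infinity>"
  proof (rule ccontr)
    assume "expected_T p x h \<noteq> \<infinity>"
    then have "good p h" using x unfolding good_def by blast
    then have "good p h0"
      using good_from_11[OF assms(1,2) \<open>h0 \<noteq> (0,0)\<close>] good_to_11[OF assms(1,2) h] by blast
    then show False using h0 unfolding good_def by blast
  qed
qed

end
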